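(* For every real $M>0$ there exist connected graphs $G$ and $H$, with $H$ a subgraph of $G$, such that $$\frac{\dim(H)}{\dim(G)}>M,\qquad \frac{\mathrm{bdim}(H)}{\mathrm{bdim}(G)}>M,\qquad \frac{\mathrm{adim}(H)}{\mathrm{adim}(G)}>M.$$
   Context: $d(x,y)$ denotes graph distance. A set $S\subseteq V(G)$ is a resolving set if for all distinct $x,y$ there is $z\in S$ with $d(x,z)\ne d(y,z)$. $\dim(G)$ is the minimum size of a resolving set. For an integer $k\ge1$ let $d_k(x,y)=\min\{d(x,y),k+1\}$. A set $A\subseteq V(G)$ is an adjacency resolving set if for all distinct $x,y\in V(G)$ there is $z\in A$ with $d_1(x,z)\ne d_1(y,z)$. $\mathrm{adim}(G)$ is the minimum size of an adjacency resolving set. A function $f:V(G)\to\mathbb{Z}_{\ge 0}$ is a resolving broadcast of $G$ if for all distinct $x,y\in V(G)$ there is $z\in V(G)$ with $f(z)=i>0$ and $d_i(x,z)\ne d_i(y,z)$. The broadcast dimension $\mathrm{bdim}(G)$ is the minimum of $\sum_{v\in V(G)}f(v)$ over all resolving broadcasts $f$ of $G$. *)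

theory Defs
  imports Main "HOL-Library.Extended_Nat"
begin

definition sgraph :: "'a set \<Rightarrow> ('a \<times> 'a) set \<Rightarrow> bool" where
  "sgraph V E \<longleftrightarrow> finite V \<and> E \<subseteq> V \<times> V \<and> sym E \<and> (\<forall>x. (x, x) \<notin> E)"

definition connected_graph :: "'a set \<Rightarrow> ('a \<times> 'a) set \<Rightarrow> bool" where
  "connected_graph V E \<longleftrightarrow> sgraph V E \<and> V \<noteq> {} \<and> (\<forall>x\<in>V. \<forall>y\<in>V. (x, y) \<in> E\<^sup>*)"

definition subgraph :: "'a set \<Rightarrow> ('a \<times> 'a) set \<Rightarrow> 'a set \<Rightarrow> ('a \<times> 'a) set \<Rightarrow> bool" where
  "subgraph VH EH VG EG \<longleftrightarrow> sgraph VH EH \<and> sgraph VG EG \<and> VH \<subseteq> VG \<and> EH \<subseteq> EG"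

text \<open>Graph distance: length of a shortest walk (used only for connected graphs).\<close>
definition gdist :: "('a \<times> 'a) set \<Rightarrow> 'a \<Rightarrow> 'a \<Rightarrow> nat" where
  "gdist E x y = (LEAST n. (x, y) \<in> E ^^ n)"

definition tdist :: "('a \<times> 'a) set \<Rightarrow> nat \<Rightarrow> 'a \<Rightarrow> 'a \<Rightarrow> nat" where
  "tdist E k x y = min (gdist E x y) (k + 1)"

definition resolving_set :: "'a set \<Rightarrow> ('a \<times> 'a) set \<Rightarrow> 'a set \<Rightarrow> bool" where
  "resolving_set V E S \<longleftrightarrow> S \<subseteq> V \<and>
     (\<forall>x\<in>V. \<forall>y\<in>V. x \<noteq> y \<longrightarrow> (\<exists>z\<in>S. gdist E x z \<noteq> gdist E y z))"

definition mdim :: "'a set \<Rightarrow> ('a \<times> 'a) set \<Rightarrow> nat" where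
  "mdim V E = (LEAST n. \<exists>S. resolving_set V E S \<and> card S = n)"

definition adj_resolving_set :: "'a set \<Rightarrow> ('a \<times> 'a) set \<Rightarrow> 'a set \<Rightarrow> bool" where
  "adj_resolving_set V E A \<longleftrightarrow> A \<subseteq> V \<and>
     (\<forall>x\<in>V. \<forall>y\<in>V. x \<noteq> y \<longrightarrow> (\<exists>z\<in>A. tdist E 1 x z \<noteq> tdist E 1 y z))"

definition adim :: "'a set \<Rightarrow> ('a \<times> 'a) set \<Rightarrow> nat" where
  "adim V E = (LEAST n. \<exists>A. adj_resolving_set V E A \<and> card A = n)"

definition resolving_broadcast :: "'a set \<Rightarrow> ('a \<times> 'a) set \<Rightarrow> ('a \<Rightarrow> nat) \<Rightarrow> bool" where
  "resolving_broadcast V E f \<longleftrightarrow> (\<forall>v. v \<notin> V \<longrightarrow> f v = 0) \<and>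
     (\<forall>x\<in>V. \<forall>y\<in>V. x \<noteq> y \<longrightarrow>
        (\<exists>z\<in>V. f z > 0 \<and> tdist E (f z) x z \<noteq> tdist E (f z) y z))"

definition bdim :: "'a set \<Rightarrow> ('a \<times> 'a) set \<Rightarrow> nat" where
  "bdim V E = (LEAST n. \<exists>f. resolving_broadcast V E f \<and> (\<Sum>v\<in>V. f v) = n)"

end

theory Submission
  imports Defs
begin

lemma gd0: "gdist E x x = 0"
  unfolding gdist_def by (rule Least_eq_0) simp

lemma gdpos: assumes "(x,y) \<in> E\<^sup>*" "x \<noteq> y" shows "gdist E x y > 0"
proof -
  obtain n where n: "(x,y) \<in> E ^^ n" using assms(1) rtrancl_power by blast
  have "(x,y) \<in> E ^^ gdist E x y" unfolding gdist_def by (rule LeastI[of _ n], rule n)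
  then show ?thesis using assms(2) by (cases "gdist E x y") auto
qed

lemma gd1: assumes "x \<noteq> y" "(x,y) \<in> E" shows "gdist E x y = 1"
  unfolding gdist_def
proof (rule Least_equality)
  show "(x,y) \<in> E ^^ 1" using assms by simp
next
  fix n assume "(x,y) \<in> E ^^ n" then show "1 \<le> n" using assms(1) by (cases n) auto
qed

lemma gd2: assumes "x \<noteq> y" "(x,y) \<notin> E" "(x,w) \<in> E" "(w,y) \<in> E" shows "gdist E x y = 2"
  unfolding gdist_def
proof (rule Least_equality)
  show "(x,y) \<in> E ^^ 2" using assms by (auto simp: numeral_2_eq_2)
next
  fix n assume n: "(x,y) \<in> E ^^ n"
  show "2 \<le> n"
  proof (rule ccontr)
    assume "\<not> 2 \<le> n" then have "n = 0 \<or> n = 1" by linarith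
    then show False using n assms(1,2) by auto
  qed
qed

lemma td1: "tdist E 1 x y = min (gdist E x y) 2"
  unfolding tdist_def by simp

lemma L5:
  assumes "connected_graph V E" "A \<subseteq> V"
    "\<And>x y. x\<in>V \<Longrightarrow> y\<in>V \<Longrightarrow> x\<noteq>y \<Longrightarrow> x\<notin>A \<Longrightarrow> y\<notin>A \<Longrightarrow> \<exists>z\<in>A. tdist E 1 x z \<noteq> tdist E 1 y z"
  shows "adj_resolving_set V E A"
  unfolding adj_resolving_set_def
proof (intro conjI ballI impI)
  show "A \<subseteq> V" by fact
  fix x y assume xy: "x \<in> V" "y \<in> V" "x \<noteq> y"
  have R: "(u,v) \<in> E\<^sup>*" if "u \<in> V" "v \<in> V" for u v using assms(1) that
    unfolding connected_graph_def by blast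
  show "\<exists>z\<in>A. tdist E 1 x z \<noteq> tdist E 1 y z"
  proof (cases "x \<in> A")
    case True
    have "gdist E y x > 0" using gdpos[OF R[of y x]] xy by auto
    then show ?thesis using True by (intro bexI[of _ x]) (auto simp: tdist_def gd0)
  next
    case F: False
    show ?thesis
    proof (cases "y \<in> A")
      case True
      have "gdist E x y > 0" using gdpos[OF R[of x y]] xy by auto
      then show ?thesis using True by (intro bexI[of _ y]) (auto simp: tdist_def gd0)
    next
      case False then show ?thesis using F xy assms(3) by blast
    qed
  qed
qed

lemma adj_res: "adj_resolving_set V E A \<Longrightarrow> resolving_set V E A"
  unfolding adj_resolving_set_def resolving_set_def tdist_def by metis

lemma adj_bc: assumes "adj_resolving_set V E A"
  shows "resolving_broadcast V E (\<lambda>v. if v \<in> A then 1 else 0)"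
proof -
  have A: "A \<subseteq> V" and R: "\<forall>x\<in>V. \<forall>y\<in>V. x \<noteq> y \<longrightarrow> (\<exists>z\<in>A. tdist E 1 x z \<noteq> tdist E 1 y z)"
    using assms by (simp_all add: adj_resolving_set_def)
  show ?thesis unfolding resolving_broadcast_def
  proof (intro conjI allI impI ballI)
    fix v assume "v \<notin> V" then show "(if v \<in> A then 1 else 0) = (0::nat)" using A by auto
  next
    fix x y assume xy: "x \<in> V" "y \<in> V" "x \<noteq> y"
    then obtain z where z: "z \<in> A" "tdist E 1 x z \<noteq> tdist E 1 y z" using R by blast
    then show "\<exists>z\<in>V. 0 < (if z \<in> A then 1 else 0::nat) \<and>
        tdist E (if z \<in> A then 1 else 0) x z \<noteq> tdist E (if z \<in> A then 1 else 0) y z"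
      using A by (intro bexI[of _ z]) auto
  qed
qed

lemma L6: assumes "adj_resolving_set V E A" "finite V"
  shows "mdim V E \<le> card A" "adim V E \<le> card A" "bdim V E \<le> card A"
proof -
  show "mdim V E \<le> card A" unfolding mdim_def
    by (rule Least_le) (use adj_res[OF assms(1)] in blast)
  show "adim V E \<le> card A" unfolding adim_def
    by (rule Least_le) (use assms(1) in blast)
  have AV: "A \<subseteq> V" using assms(1) unfolding adj_resolving_set_def by blast
  have "(\<Sum>v\<in>V. (if v \<in> A then 1 else 0::nat)) = card A"
    using AV assms(2) by (simp add: sum.If_cases Int_absorb1)
  then show "bdim V E \<le> card A" unfolding bdim_def
    by (intro Least_le) (use adj_bc[OF assms(1)] in blast)
qed

lemma Vres: "connected_graph V E \<Longrightarrow> adj_resolving_set V E V"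
  by (rule L5) auto

lemma L7: assumes "connected_graph V E" "x \<in> V" "y \<in> V" "x \<noteq> y"
  shows "1 \<le> mdim V E" "1 \<le> adim V E" "1 \<le> bdim V E"
proof -
  have fin: "finite V" using assms(1) unfolding connected_graph_def sgraph_def by blast
  have VR: "adj_resolving_set V E V" by (rule Vres[OF assms(1)])
  have "\<exists>S. resolving_set V E S \<and> card S = mdim V E" unfolding mdim_def
    by (rule LeastI_ex) (use adj_res[OF VR] in blast)
  then obtain S where S: "resolving_set V E S" "card S = mdim V E" by blast
  show "1 \<le> mdim V E"
  proof (rule ccontr)
    assume "\<not> 1 \<le> mdim V E"
    then have c0: "card S = 0" using S(2) by simp
    moreover have "finite S" using S(1) fin finite_subset unfolding resolving_set_def by blast
    ultimately have "S = {}" using c0 by simp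
    then show False using S(1) assms unfolding resolving_set_def by blast
  qed
  have "\<exists>S. adj_resolving_set V E S \<and> card S = adim V E" unfolding adim_def
    by (rule LeastI_ex) (use VR in blast)
  then obtain S where S: "adj_resolving_set V E S" "card S = adim V E" by blast
  show "1 \<le> adim V E"
  proof (rule ccontr)
    assume "\<not> 1 \<le> adim V E"
    then have c0: "card S = 0" using S(2) by simp
    moreover have "finite S" using S(1) fin finite_subset unfolding adj_resolving_set_def by blast
    ultimately have "S = {}" using c0 by simp
    then show False using S(1) assms unfolding adj_resolving_set_def by blast
  qed
  have "\<exists>f. resolving_broadcast V E f \<and> (\<Sum>v\<in>V. f v) = bdim V E" unfolding bdim_def
    by (rule LeastI_ex) (use adj_bc[OF VR] in blast)
  then obtain f where f: "resolving_broadcast V E f" "(\<Sum>v\<in>V. f v) = bdim V E" by blast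
  show "1 \<le> bdim V E"
  proof (rule ccontr)
    assume "\<not> 1 \<le> bdim V E"
    then have "sum f V = 0" using f(2) by simp
    then have "\<forall>v\<in>V. f v = 0" using fin by simp
    moreover obtain z where "z \<in> V" "f z > 0" using f(1) assms unfolding resolving_broadcast_def by blast
    ultimately show False by simp
  qed
qed

lemma Comb: assumes "finite L" "finite T" "\<And>x y. x\<in>L \<Longrightarrow> y\<in>L \<Longrightarrow> x\<noteq>y \<Longrightarrow> x\<in>T \<or> y\<in>T"
  shows "card L \<le> card T + 1"
proof -
  have "card L \<le> card (L \<inter> T) + card (L - T)"
    by (metis Int_Diff_Un card_Un_le)
  moreover have "card (L \<inter> T) \<le> card T" using assms(2) by (simp add: card_mono)
  moreover have "card (L - T) \<le> Suc 0" using assms(1,3)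
    by (subst card_le_Suc0_iff_eq) auto
  ultimately show ?thesis by linarith
qed


lemma L8: assumes cg: "connected_graph V E" and LV: "L \<subseteq> V"
  and H: "\<And>x y z. x\<in>L \<Longrightarrow> y\<in>L \<Longrightarrow> x\<noteq>y \<Longrightarrow> z\<in>V \<Longrightarrow> z\<noteq>x \<Longrightarrow> z\<noteq>y \<Longrightarrow> gdist E x z = gdist E y z"
  shows "card L \<le> mdim V E + 1" "card L \<le> adim V E + 1" "card L \<le> bdim V E + 1"
proof -
  have fin: "finite V" using cg unfolding connected_graph_def sgraph_def by blast
  have finL: "finite L" using LV fin finite_subset by blast
  have VR: "adj_resolving_set V E V" by (rule Vres[OF cg])
  have "\<exists>S. resolving_set V E S \<and> card S = mdim V E" unfolding mdim_def
    by (rule LeastI_ex) (use adj_res[OF VR] in blast)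
  then obtain S where S: "resolving_set V E S" "card S = mdim V E" by blast
  have "card L \<le> card S + 1"
  proof (rule Comb[OF finL])
    show "finite S" using S(1) fin finite_subset unfolding resolving_set_def by blast
    fix x y assume xy: "x \<in> L" "y \<in> L" "x \<noteq> y"
    show "x \<in> S \<or> y \<in> S"
    proof (rule ccontr)
      assume nn: "\<not> (x \<in> S \<or> y \<in> S)"
      obtain z where "z \<in> S" "gdist E x z \<noteq> gdist E y z"
        using S(1) xy LV unfolding resolving_set_def by blast
      then show False using H[OF xy, of z] nn S(1) unfolding resolving_set_def by blast
    qed
  qed
  then show "card L \<le> mdim V E + 1" using S(2) by simp
  have "\<exists>S. adj_resolving_set V E S \<and> card S = adim V E" unfolding adim_def
    by (rule LeastI_ex) (use VR in blast)
  then obtain S where S: "adj_resolving_set V E S" "card S = adim V E" by blast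
  have "card L \<le> card S + 1"
  proof (rule Comb[OF finL])
    show "finite S" using S(1) fin finite_subset unfolding adj_resolving_set_def by blast
    fix x y assume xy: "x \<in> L" "y \<in> L" "x \<noteq> y"
    show "x \<in> S \<or> y \<in> S"
    proof (rule ccontr)
      assume nn: "\<not> (x \<in> S \<or> y \<in> S)"
      obtain z where z: "z \<in> S" "tdist E 1 x z \<noteq> tdist E 1 y z"
        using S(1) xy LV unfolding adj_resolving_set_def by blast
      have "z \<in> V" using z(1) S(1) unfolding adj_resolving_set_def by blast
      then have "gdist E x z = gdist E y z" using H[OF xy, of z] nn z(1) by blast
      then show False using z(2) unfolding tdist_def by simp
    qed
  qed
  then show "card L \<le> adim V E + 1" using S(2) by simp
  have "\<exists>f. resolving_broadcast V E f \<and> (\<Sum>v\<in>V. f v) = bdim V E" unfolding bdim_def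
    by (rule LeastI_ex) (use adj_bc[OF VR] in blast)
  then obtain f where f: "resolving_broadcast V E f" "(\<Sum>v\<in>V. f v) = bdim V E" by blast
  define T where "T = {v\<in>V. f v > 0}"
  have finT: "finite T" using fin unfolding T_def by simp
  have "card L \<le> card T + 1"
  proof (rule Comb[OF finL finT])
    fix x y assume xy: "x \<in> L" "y \<in> L" "x \<noteq> y"
    show "x \<in> T \<or> y \<in> T"
    proof (rule ccontr)
      assume nn: "\<not> (x \<in> T \<or> y \<in> T)"
      obtain z where z: "z \<in> V" "f z > 0" "tdist E (f z) x z \<noteq> tdist E (f z) y z"
        using f(1) xy LV unfolding resolving_broadcast_def by blast
      have "z \<in> T" using z unfolding T_def by simp
      then have "gdist E x z = gdist E y z" using H[OF xy z(1)] nn by blast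
      then show False using z(3) unfolding tdist_def by simp
    qed
  qed
  moreover have "card T \<le> (\<Sum>v\<in>V. f v)"
  proof -
    have "card T = (\<Sum>v\<in>T. 1)" by simp
    also have "\<dots> \<le> (\<Sum>v\<in>T. f v)" by (rule sum_mono) (auto simp: T_def)
    also have "\<dots> \<le> (\<Sum>v\<in>V. f v)" by (rule sum_mono2[OF fin]) (auto simp: T_def)
    finally show ?thesis .
  qed
  ultimately show "card L \<le> bdim V E + 1" using f(2) by simp
qed

definition VG :: "nat \<Rightarrow> nat set" where "VG m = {0..< m+1+2^m}"
definition badj :: "nat \<Rightarrow> nat \<Rightarrow> nat \<Rightarrow> bool" where
  "badj m u v \<longleftrightarrow> 1 \<le> u \<and> u \<le> m \<and> m+1 \<le> v \<and> bit (v - (m+1)) (u - 1)"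
definition EG :: "nat \<Rightarrow> (nat \<times> nat) set" where
  "EG m = {(u,v). u \<in> VG m \<and> v \<in> VG m \<and> u \<noteq> v \<and> (u = 0 \<or> v = 0 \<or> badj m u v \<or> badj m v u)}"
definition VH :: "nat \<Rightarrow> nat set" where "VH m = insert 0 {m+1..< m+1+2^m}"
definition EH :: "nat \<Rightarrow> (nat \<times> nat) set" where
  "EH m = {(u,v). u \<in> VH m \<and> v \<in> VH m \<and> u \<noteq> v \<and> (u = 0 \<or> v = 0)}"

lemma sgG: "sgraph (VG m) (EG m)"
  unfolding sgraph_def
proof (intro conjI allI)
  show "finite (VG m)" by (simp add: VG_def)
  show "EG m \<subseteq> VG m \<times> VG m" unfolding EG_def by blast
  show "sym (EG m)" unfolding sym_def EG_def by blast
  fix x show "(x,x) \<notin> EG m" unfolding EG_def by blast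
qed

lemma sgH: "sgraph (VH m) (EH m)"
  unfolding sgraph_def
proof (intro conjI allI)
  show "finite (VH m)" by (simp add: VH_def)
  show "EH m \<subseteq> VH m \<times> VH m" unfolding EH_def by blast
  show "sym (EH m)" unfolding sym_def EH_def by blast
  fix x show "(x,x) \<notin> EH m" unfolding EH_def by blast
qed

lemma cgG: "connected_graph (VG m) (EG m)"
  unfolding connected_graph_def
proof (intro conjI ballI)
  have 0: "0 \<in> VG m" unfolding VG_def by simp
  have a: "(x,0) \<in> EG m" "(0,x) \<in> EG m" if "x \<in> VG m" "x \<noteq> 0" for x
    using that 0 unfolding EG_def by blast+
  show "sgraph (VG m) (EG m)" by (rule sgG)
  show "VG m \<noteq> {}" using 0 by blast
  fix x y assume xy: "x \<in> VG m" "y \<in> VG m"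
  have "(x,0) \<in> (EG m)\<^sup>*"
  proof (cases "x = 0")
    case False then show ?thesis using a(1)[OF xy(1)] by blast
  qed simp
  moreover have "(0,y) \<in> (EG m)\<^sup>*"
  proof (cases "y = 0")
    case False then show ?thesis using a(2)[OF xy(2)] by blast
  qed simp
  ultimately show "(x,y) \<in> (EG m)\<^sup>*" by (rule rtrancl_trans)
qed

lemma cgH: "connected_graph (VH m) (EH m)"
  unfolding connected_graph_def
proof (intro conjI ballI)
  have 0: "0 \<in> VH m" unfolding VH_def by simp
  have a: "(x,0) \<in> EH m" "(0,x) \<in> EH m" if "x \<in> VH m" "x \<noteq> 0" for x
    using that 0 unfolding EH_def by blast+
  show "sgraph (VH m) (EH m)" by (rule sgH)
  show "VH m \<noteq> {}" using 0 by blast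
  fix x y assume xy: "x \<in> VH m" "y \<in> VH m"
  have "(x,0) \<in> (EH m)\<^sup>*"
  proof (cases "x = 0")
    case False then show ?thesis using a(1)[OF xy(1)] by blast
  qed simp
  moreover have "(0,y) \<in> (EH m)\<^sup>*"
  proof (cases "y = 0")
    case False then show ?thesis using a(2)[OF xy(2)] by blast
  qed simp
  ultimately show "(x,y) \<in> (EH m)\<^sup>*" by (rule rtrancl_trans)
qed

lemma VHG: "VH m \<subseteq> VG m" unfolding VH_def VG_def by auto

lemma subHG: "subgraph (VH m) (EH m) (VG m) (EG m)"
  unfolding subgraph_def
proof (intro conjI sgG sgH VHG)
  show "EH m \<subseteq> EG m" unfolding EH_def EG_def using VHG[of m] by blast
qed

lemma bit_lt: assumes "(i::nat) < 2^m" "bit i j" shows "j < m"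
proof -
  have "take_bit m i = i" using assms(1) by (simp add: take_bit_nat_eq_self)
  then show ?thesis using assms(2) bit_take_bit_iff[of m i j] by simp
qed

lemma Gres: "adj_resolving_set (VG m) (EG m) {0..m}"
proof (rule L5[OF cgG])
  show "{0..m} \<subseteq> VG m" unfolding VG_def by auto
  fix x y assume xy: "x \<in> VG m" "y \<in> VG m" "x \<noteq> y" "x \<notin> {0..m}" "y \<notin> {0..m}"
  define i where "i = x - (m+1)"
  define i' where "i' = y - (m+1)"
  have x: "x = m+1+i" "i < 2^m" using xy unfolding i_def VG_def by auto
  have y: "y = m+1+i'" "i' < 2^m" using xy unfolding i'_def VG_def by auto
  have "i \<noteq> i'" using x y xy by auto
  then obtain j where j: "bit i j \<noteq> bit i' j" using bit_eq_iff by blast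
  have jm: "j < m" using j bit_lt x(2) y(2) by blast
  define z where "z = j + 1"
  have zV: "z \<in> VG m" "z \<noteq> 0" "z \<noteq> x" "z \<noteq> y" using jm x y unfolding z_def VG_def by auto
  have 0: "0 \<in> VG m" unfolding VG_def by simp
  have zm: "z \<le> m" using jm unfolding z_def by simp
  have t: "tdist (EG m) 1 w z = (if bit (w - (m+1)) j then 1 else 2)"
    if w: "w \<in> VG m" "w > m" for w
  proof (cases "bit (w - (m+1)) j")
    case True
    then have "(w,z) \<in> EG m" using w zV jm unfolding EG_def badj_def z_def by auto
    then have "gdist (EG m) w z = 1" using gd1[of w z] w zV zm by auto
    then show ?thesis using True by (simp add: tdist_def)
  next
    case False
    then have "(w,z) \<notin> EG m" using w zV jm unfolding EG_def badj_def z_def by auto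
    moreover have "(w,0) \<in> EG m" "(0,z) \<in> EG m" using w zV 0 unfolding EG_def by auto
    ultimately have "gdist (EG m) w z = 2" using gd2[of w z "EG m" 0] w zV zm by auto
    then show ?thesis using False by (simp add: tdist_def)
  qed
  have "tdist (EG m) 1 x z \<noteq> tdist (EG m) 1 y z"
    using t[of x] t[of y] xy x y j by auto
  moreover have "z \<in> {0..m}" using jm unfolding z_def by auto
  ultimately show "\<exists>z\<in>{0..m}. tdist (EG m) 1 x z \<noteq> tdist (EG m) 1 y z" by blast
qed

lemma Hlow: "card {m+1..< m+1+2^m} \<le> mdim (VH m) (EH m) + 1"
  "card {m+1..< m+1+2^m} \<le> adim (VH m) (EH m) + 1"
  "card {m+1..< m+1+2^m} \<le> bdim (VH m) (EH m) + 1"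
proof -
  have LV: "{m+1..< m+1+2^m} \<subseteq> VH m" unfolding VH_def by auto
  have 0: "0 \<in> VH m" unfolding VH_def by simp
  have H: "gdist (EH m) x z = gdist (EH m) y z"
    if xy: "x \<in> {m+1..< m+1+2^m}" "y \<in> {m+1..< m+1+2^m}" "x \<noteq> y" "z \<in> VH m" "z \<noteq> x" "z \<noteq> y" for x y z
  proof (cases "z = 0")
    case True
    then have "(x,z) \<in> EH m" "(y,z) \<in> EH m" using xy 0 LV unfolding EH_def by auto
    then show ?thesis using gd1 xy by metis
  next
    case False
    then have z: "z \<in> {m+1..< m+1+2^m}" using xy unfolding VH_def by auto
    have d: "gdist (EH m) w z = 2" if "w \<in> {m+1..< m+1+2^m}" "w \<noteq> z" for w
      by (rule gd2[of _ _ _ 0]) (use that z 0 LV in \<open>auto simp: EH_def\<close>)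
    show ?thesis using d[of x] d[of y] xy by auto
  qed
  show "card {m+1..< m+1+2^m} \<le> mdim (VH m) (EH m) + 1" by (rule L8(1)[OF cgH LV H])
  show "card {m+1..< m+1+2^m} \<le> adim (VH m) (EH m) + 1" by (rule L8(2)[OF cgH LV H])
  show "card {m+1..< m+1+2^m} \<le> bdim (VH m) (EH m) + 1" by (rule L8(3)[OF cgH LV H])
qed

lemma sq_le: "6 \<le> m \<Longrightarrow> (m+1)^2 \<le> (2::nat)^m"
proof (induction m rule: dec_induct)
  case base then show ?case by simp
next
  case (step n)
  have "6*6 \<le> n*n" using step(1) mult_le_mono by blast
  then have "(Suc n + 1)^2 \<le> 2 * (n+1)^2" by (simp add: power2_eq_square algebra_simps)
  also have "\<dots> \<le> 2 * 2^n" using step(3) by simp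
  finally show ?case by simp
qed

lemma exm: assumes "M > (0::real)" shows "\<exists>m. M * (real m + 1) < 2^m - 1"
proof -
  define m where "m = max 6 (nat \<lceil>M\<rceil> + 1)"
  have m6: "6 \<le> m" and mM: "M < real m" unfolding m_def by auto (linarith)
  have "(m+1)^2 \<le> (2::nat)^m" by (rule sq_le[OF m6])
  then have "real ((m+1)^2) \<le> real (2^m)" by linarith
  then have A: "(real m + 1)^2 \<le> 2^m" by (simp add: add.commute)
  have "M * (real m + 1) < real m * (real m + 1)" using mM by (intro mult_strict_right_mono) auto
  also have "\<dots> \<le> (real m + 1)^2 - 1" by (simp add: power2_eq_square algebra_simps)
  also have "\<dots> \<le> 2^m - 1" using A by simp
  finally show ?thesis by blast
qed

lemma ratio:
  assumes "1 \<le> g" "g \<le> m+1" "2^m \<le> h+(1::nat)" "M*(real m+1) < 2^m - 1" "M > (0::real)"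
  shows "M < real h / real g"
proof -
  have g0: "real g > 0" using assms(1) by simp
  have "real (2^m) \<le> real h + 1" using assms(3) by linarith
  then have h: "2^m - 1 \<le> real h" by simp
  have "M * real g \<le> M * (real m + 1)" using assms(2,5) by (intro mult_left_mono) auto
  then have "M * real g < real h" using h assms(4) by linarith
  then show ?thesis using g0 by (simp add: pos_less_divide_eq)
qed

theorem theorem5p7:
  fixes M :: real
  assumes "M > 0"
  shows "\<exists>(VG :: nat set) EG VH EH.
           connected_graph VG EG \<and> connected_graph VH EH \<and> subgraph VH EH VG EG \<and>
           real (mdim VH EH) / real (mdim VG EG) > M \<and>
           real (bdim VH EH) / real (bdim VG EG) > M \<and>
           real (adim VH EH) / real (adim VG EG) > M"
proof -
  obtain m where m: "M * (real m + 1) < 2^m - 1" using exm[OF assms] by blast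
  have fin: "finite (VG m)" unfolding VG_def by simp
  have up: "mdim (VG m) (EG m) \<le> m+1" "adim (VG m) (EG m) \<le> m+1" "bdim (VG m) (EG m) \<le> m+1"
  proof -
    have c: "card {0..m} = m+1" by simp
    show "mdim (VG m) (EG m) \<le> m+1" using L6(1)[OF Gres fin] unfolding c .
    show "adim (VG m) (EG m) \<le> m+1" using L6(2)[OF Gres fin] unfolding c .
    show "bdim (VG m) (EG m) \<le> m+1" using L6(3)[OF Gres fin] unfolding c .
  qed
  have v: "0 \<in> VG m" "1 \<in> VG m" unfolding VG_def by auto
  note lo = L7[OF cgG v zero_neq_one]
  have hl: "2^m \<le> mdim (VH m) (EH m) + 1" "2^m \<le> adim (VH m) (EH m) + 1" "2^m \<le> bdim (VH m) (EH m) + 1"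
  proof -
    have c: "card {m+1..< m+1+2^m} = 2^m" by simp
    show "2^m \<le> mdim (VH m) (EH m) + 1" using Hlow(1)[of m] unfolding c .
    show "2^m \<le> adim (VH m) (EH m) + 1" using Hlow(2)[of m] unfolding c .
    show "2^m \<le> bdim (VH m) (EH m) + 1" using Hlow(3)[of m] unfolding c .
  qed
  have r1: "real (mdim (VH m) (EH m)) / real (mdim (VG m) (EG m)) > M"
    by (rule ratio[OF lo(1) up(1) hl(1) m assms])
  have r2: "real (adim (VH m) (EH m)) / real (adim (VG m) (EG m)) > M"
    by (rule ratio[OF lo(2) up(2) hl(2) m assms])
  have r3: "real (bdim (VH m) (EH m)) / real (bdim (VG m) (EG m)) > M"
    by (rule ratio[OF lo(3) up(3) hl(3) m assms])
  have X: "connected_graph (VG m) (EG m) \<and> connected_graph (VH m) (EH m) \<and> subgraph (VH m) (EH m) (VG m) (EG m) \<and>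
           real (mdim (VH m) (EH m)) / real (mdim (VG m) (EG m)) > M \<and>
           real (bdim (VH m) (EH m)) / real (bdim (VG m) (EG m)) > M \<and>
           real (adim (VH m) (EH m)) / real (adim (VG m) (EG m)) > M"
    by (intro conjI cgG cgH subHG r1 r2 r3)
  show ?thesis
    apply (rule exI[of _ "VG m"]) apply (rule exI[of _ "EG m"])
    apply (rule exI[of _ "VH m"]) apply (rule exI[of _ "EH m"])
    by (rule X)
qed

end
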